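(* For any simple undirected graph $G$ with $n$ vertices and $m$ edges, $$n_G(\mathcal{L}_4)=m-n\langle k^2\rangle+\mu_1-\mu_2,\qquad \mu_1=\frac12\sum_{st\in E}(\xi(s)+\xi(t)),\quad \mu_2=\sum_{st\in E}|c(s,t)|.$$
   Context: $k_x$ degree of $x$, $\langle k^2\rangle=\frac1n\sum_xk_x^2$, $\Gamma(x)$ neighbourhood, $\xi(s)=\sum_{t\in\Gamma(s)}k_t$, $c(s,t)=\Gamma(s)\cap\Gamma(t)$. $\mathcal{L}_4$ is the path on 4 vertices; $n_G(F)$ counts (not necessarily induced) subgraphs isomorphic to $F$. *)

theory Defs
  imports Complex_Main
begin

definition simple_graph :: "'a set \<Rightarrow> 'a set set \<Rightarrow> bool" where
  "simple_graph V E \<longleftrightarrow> finite V \<and> (\<forall>e\<in>E. e \<subseteq> V \<and> card e = 2)"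

definition degree :: "'a set set \<Rightarrow> 'a \<Rightarrow> nat" where
  "degree E x = card {e\<in>E. x \<in> e}"

definition nbhd :: "'a set set \<Rightarrow> 'a \<Rightarrow> 'a set" where
  "nbhd E x = {y. {x, y} \<in> E}"

definition xi :: "'a set set \<Rightarrow> 'a \<Rightarrow> nat" where
  "xi E s = (\<Sum>t\<in>nbhd E s. degree E t)"

definition mean_sq_degree :: "'a set \<Rightarrow> 'a set set \<Rightarrow> real" where
  "mean_sq_degree V E = (1 / real (card V)) * (\<Sum>x\<in>V. real (degree E x) ^ 2)"

text \<open>Number of (not necessarily induced) subgraphs (V',E') of G isomorphic to the path
  on 4 vertices 0-1-2-3.\<close>
definition count_P4 :: "'a set \<Rightarrow> 'a set set \<Rightarrow> nat" where
  "count_P4 V E = card {(V', E'). V' \<subseteq> V \<and> E' \<subseteq> E \<and>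
     (\<exists>f. bij_betw f {0..<4::nat} V' \<and> E' = {{f i, f (Suc i)} | i. i < 3})}"

end

theory Submission
  imports Defs
begin

lemma sg_finE: "simple_graph V E \<Longrightarrow> finite E"
  unfolding simple_graph_def
  by (meson Pow_iff finite_Pow_iff finite_subset subsetI)

lemma sg_edge: "simple_graph V E \<Longrightarrow> {x,y} \<in> E \<Longrightarrow> x \<noteq> y \<and> x \<in> V \<and> y \<in> V"
proof -
  assume a: "simple_graph V E" "{x,y} \<in> E"
  then have "card {x,y} = 2" "{x,y} \<subseteq> V" unfolding simple_graph_def by auto
  then show ?thesis by (cases "x = y") auto
qed

lemma sg_nbhd: "simple_graph V E \<Longrightarrow> nbhd E s = {t\<in>V. {s,t} \<in> E}"
  unfolding nbhd_def by (auto dest: sg_edge[of V E])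

lemma sg_nbhd_fin: "simple_graph V E \<Longrightarrow> finite (nbhd E s)"
  using sg_nbhd[of V E s] unfolding simple_graph_def by simp

lemma sg_nbhd_sym: "t \<in> nbhd E s \<longleftrightarrow> s \<in> nbhd E t"
  unfolding nbhd_def by (simp add: insert_commute)

lemma sg_inc: assumes "simple_graph V E"
  shows "{e\<in>E. s\<in>e} = (\<lambda>t. {s,t}) ` nbhd E s"
proof
  show "{e\<in>E. s\<in>e} \<subseteq> (\<lambda>t. {s,t}) ` nbhd E s"
  proof
    fix e assume "e \<in> {e\<in>E. s\<in>e}"
    then have e: "e \<in> E" "s \<in> e" by auto
    then have "card e = 2" using assms unfolding simple_graph_def by auto
    then obtain x y where xy: "e = {x,y}" "x\<noteq>y" by (auto simp: card_2_iff)
    then have "\<exists>t. e = {s,t}" using e by auto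
    then obtain t where "e = {s,t}" by blast
    then show "e \<in> (\<lambda>t. {s,t}) ` nbhd E s" using e unfolding nbhd_def by auto
  qed
qed (auto simp: nbhd_def)

lemma sg_inj: "simple_graph V E \<Longrightarrow> inj_on (\<lambda>t. {s,t}) (nbhd E s)"
  unfolding inj_on_def by (auto simp: doubleton_eq_iff)

lemma sg_degree: "simple_graph V E \<Longrightarrow> degree E s = card (nbhd E s)"
proof -
  assume a: "simple_graph V E"
  have "degree E s = card ((\<lambda>t. {s,t}) ` nbhd E s)" unfolding degree_def sg_inc[OF a] ..
  also have "\<dots> = card (nbhd E s)" by (rule card_image[OF sg_inj[OF a]])
  finally show ?thesis .
qed

lemma sg_R: assumes "simple_graph V E"
  shows "(\<Sum>e\<in>{e\<in>E. s\<in>e}. F e) = (\<Sum>t\<in>nbhd E s. F {s,t})"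
  unfolding sg_inc[OF assms] by (simp add: sum.reindex sg_inj[OF assms])

lemma sg_L0: assumes "simple_graph V E"
  shows "(\<Sum>e\<in>E. \<Sum>s\<in>e. F s e) = (\<Sum>s\<in>V. \<Sum>t\<in>nbhd E s. F s {s,t})"
proof -
  have fV: "finite V" and sub: "\<And>e. e\<in>E \<Longrightarrow> e \<subseteq> V" using assms unfolding simple_graph_def by auto
  have "(\<Sum>e\<in>E. \<Sum>s\<in>e. F s e) = (\<Sum>e\<in>E. \<Sum>s\<in>{s\<in>V. s\<in>e}. F s e)"
  proof (rule sum.cong[OF refl])
    fix e assume "e \<in> E"
    then have "{s\<in>V. s\<in>e} = e" using sub by auto
    then show "(\<Sum>s\<in>e. F s e) = (\<Sum>s\<in>{s\<in>V. s\<in>e}. F s e)" by simp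
  qed
  also have "\<dots> = (\<Sum>s\<in>V. \<Sum>e\<in>{e\<in>E. s\<in>e}. F s e)"
    by (rule sum.swap_restrict[OF sg_finE[OF assms] fV])
  also have "\<dots> = (\<Sum>s\<in>V. \<Sum>t\<in>nbhd E s. F s {s,t})"
    by (rule sum.cong[OF refl]) (rule sg_R[OF assms])
  finally show ?thesis .
qed

lemma sg_two: assumes "simple_graph V E" "e \<in> E"
  shows "(\<Sum>s\<in>e. (c::real)) = 2 * c"
proof -
  have "card e = 2" using assms unfolding simple_graph_def by auto
  then show ?thesis by simp
qed

lemma sg_sym: assumes "simple_graph V E"
  shows "(\<Sum>s\<in>V. \<Sum>t\<in>nbhd E s. g s t) = (\<Sum>s\<in>V. \<Sum>t\<in>nbhd E s. g t s)"
proof -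
  have fV: "finite V" using assms unfolding simple_graph_def by auto
  have "(\<Sum>s\<in>V. \<Sum>t\<in>nbhd E s. g s t) = (\<Sum>s\<in>V. \<Sum>t\<in>{t\<in>V. {s,t}\<in>E}. g s t)"
    using sg_nbhd[OF assms] by simp
  also have "\<dots> = (\<Sum>t\<in>V. \<Sum>s\<in>{s\<in>V. {s,t}\<in>E}. g s t)"
    by (rule sum.swap_restrict[OF fV fV])
  also have "\<dots> = (\<Sum>t\<in>V. \<Sum>s\<in>nbhd E t. g s t)"
    using sg_nbhd[OF assms] by (simp add: insert_commute)
  finally show ?thesis .
qed


lemma c2: "{x,y} \<in> {{a,b},{b,c},{c,d}} \<Longrightarrow> (x=a\<and>y=b) \<or> (x=b\<and>y=a) \<or> (x=b\<and>y=c)\<or>(x=c\<and>y=b)\<or>(x=c\<and>y=d)\<or>(x=d\<and>y=c)"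
    unfolding insert_iff empty_iff doubleton_eq_iff by (elim disjE) simp_all

lemma fib:
  assumes d: "a\<noteq>b" "a\<noteq>c" "a\<noteq>d" "b\<noteq>c" "b\<noteq>d" "c\<noteq>d"
   "a'\<noteq>b'" "a'\<noteq>c'" "a'\<noteq>d'" "b'\<noteq>c'" "b'\<noteq>d'" "c'\<noteq>d'"
   and eq: "{{a',b'},{b',c'},{c',d'}} = {{a,b},{b,c},{c,d}}"
  shows "(a',b',c',d') = (a,b,c,d) \<or> (a',b',c',d') = (d,c,b,a)"
proof -
  have e1: "{a',b'} \<in> {{a,b},{b,c},{c,d}}" "{b',c'} \<in> {{a,b},{b,c},{c,d}}" "{c',d'} \<in> {{a,b},{b,c},{c,d}}"
    by (simp_all only: eq[symmetric]) simp_all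
  show ?thesis
    apply (insert c2[OF e1(1)] c2[OF e1(2)] c2[OF e1(3)] d)
    apply (elim disjE conjE)
    apply simp_all
    done
qed

definition PP :: "'a set set \<Rightarrow> ('a \<times> 'a \<times> 'a \<times> 'a) set" where
  "PP E = {(a,b,c,d). {a,b}\<in>E \<and> {b,c}\<in>E \<and> {c,d}\<in>E \<and> a\<noteq>c \<and> b\<noteq>d \<and> a\<noteq>d}"

definition phi :: "'a \<times> 'a \<times> 'a \<times> 'a \<Rightarrow> 'a set \<times> 'a set set" where
  "phi x = (case x of (a,b,c,d) \<Rightarrow> ({a,b,c,d}, {{a,b},{b,c},{c,d}}))"

lemma four: "{0..<4::nat} = {0,1,2,3}" by auto
lemma three: "{{f i, f (Suc i)} | i. i < (3::nat)} = {{f 0, f 1}, {f 1, f 2}, {f 2, f 3}}"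
proof -
  have "\<And>i::nat. i < 3 \<longleftrightarrow> i = 0 \<or> i = 1 \<or> i = 2" by auto
  then show ?thesis by (auto simp: numeral_eq_Suc)
qed

lemma count_set: assumes G: "simple_graph V E"
  shows "{(V', E'). V' \<subseteq> V \<and> E' \<subseteq> E \<and>
     (\<exists>f. bij_betw f {0..<4::nat} V' \<and> E' = {{f i, f (Suc i)} | i. i < 3})} = phi ` PP E"
proof (intro equalityI subsetI)
  fix y assume "y \<in> {(V', E'). V' \<subseteq> V \<and> E' \<subseteq> E \<and>
     (\<exists>f. bij_betw f {0..<4::nat} V' \<and> E' = {{f i, f (Suc i)} | i. i < 3})}"
  then obtain V' E' f where y: "y = (V',E')" "E' \<subseteq> E" "bij_betw f {0..<4::nat} V'"
     "E' = {{f i, f (Suc i)} | i. i < 3}" by blast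
  have inj: "inj_on f {0,1,2,3}" and im: "f ` {0,1,2,3} = V'" using y(3) four unfolding bij_betw_def by auto
  have dd: "f 0 \<noteq> f 1" "f 0 \<noteq> f 2" "f 0 \<noteq> f 3" "f 1 \<noteq> f 2" "f 1 \<noteq> f 3" "f 2 \<noteq> f 3"
    using inj unfolding inj_on_def by (metis insertCI numeral_eq_iff semiring_norm(83,84,85,86,87,89) zero_neq_numeral one_neq_zero zero_neq_one numeral_One)+
  have E': "E' = {{f 0, f 1}, {f 1, f 2}, {f 2, f 3}}" using y(4) three by simp
  have V': "V' = {f 0, f 1, f 2, f 3}" using im by auto
  have "(f 0, f 1, f 2, f 3) \<in> PP E" using E' y(2) dd unfolding PP_def by auto
  moreover have "y = phi (f 0, f 1, f 2, f 3)" using y(1) E' V' unfolding phi_def by simp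
  ultimately show "y \<in> phi ` PP E" by blast
next
  fix y assume "y \<in> phi ` PP E"
  then obtain a b c d where x: "(a,b,c,d) \<in> PP E" "y = phi (a,b,c,d)" by auto
  have ab: "a \<noteq> b" "b \<noteq> c" "c \<noteq> d" "a \<in> V" "b \<in> V" "c \<in> V" "d \<in> V"
    using x(1) sg_edge[OF G] unfolding PP_def by blast+
  have ed: "{a,b}\<in>E" "{b,c}\<in>E" "{c,d}\<in>E" "a\<noteq>c" "b\<noteq>d" "a\<noteq>d" using x(1) unfolding PP_def by auto
  define f where "f = (\<lambda>i::nat. if i = 0 then a else if i = 1 then b else if i = 2 then c else d)"
  have f: "f 0 = a" "f 1 = b" "f 2 = c" "f 3 = d" unfolding f_def by auto
  have "bij_betw f {0..<4::nat} {a,b,c,d}"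
    unfolding bij_betw_def four inj_on_def using ab ed f by auto
  moreover have "{{a,b},{b,c},{c,d}} = {{f i, f (Suc i)} | i. i < 3}" unfolding three f ..
  ultimately have mem: "{a,b,c,d} \<subseteq> V \<and> {{a,b},{b,c},{c,d}} \<subseteq> E \<and>
     (\<exists>f. bij_betw f {0..<4::nat} {a,b,c,d} \<and> {{a,b},{b,c},{c,d}} = {{f i, f (Suc i)} | i. i < 3})"
    using ab ed by blast
  show "y \<in> {(V', E'). V' \<subseteq> V \<and> E' \<subseteq> E \<and>
     (\<exists>f. bij_betw f {0..<4::nat} V' \<and> E' = {{f i, f (Suc i)} | i. i < 3})}"
    using x(2) mem unfolding phi_def by simp
qed

lemma card_PP: assumes G: "simple_graph V E"
  shows "card (PP E) = 2 * count_P4 V E"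
proof -
  have fin: "finite (PP E)"
  proof (rule finite_subset)
    show "PP E \<subseteq> V \<times> V \<times> V \<times> V" unfolding PP_def using sg_edge[OF G] by blast
    show "finite (V \<times> V \<times> V \<times> V)" using G unfolding simple_graph_def by simp
  qed
  have fibre: "{x\<in>PP E. phi x = y} = {(a,b,c,d), (d,c,b,a)}" if "(a,b,c,d) \<in> PP E" "y = phi (a,b,c,d)" for a b c d y
  proof -
    have ab: "a \<noteq> b" "b \<noteq> c" "c \<noteq> d"
      using that(1) sg_edge[OF G] unfolding PP_def by blast+
    have ed: "{a,b}\<in>E" "{b,c}\<in>E" "{c,d}\<in>E" "a\<noteq>c" "b\<noteq>d" "a\<noteq>d" using that(1) unfolding PP_def by auto
    show ?thesis
    proof (intro equalityI subsetI)
      fix x assume "x \<in> {x\<in>PP E. phi x = y}"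
      then have xx: "x \<in> PP E" "phi x = y" by auto
      obtain a' b' c' d' where x0: "x = (a',b',c',d')" by (cases x) auto
      have x: "x = (a',b',c',d')" "(a',b',c',d') \<in> PP E" "phi (a',b',c',d') = y" using xx x0 by auto
      have ab': "a' \<noteq> b'" "b' \<noteq> c'" "c' \<noteq> d'"
        using x(2) sg_edge[OF G] unfolding PP_def by blast+
      have ed': "a'\<noteq>c'" "b'\<noteq>d'" "a'\<noteq>d'" using x(2) unfolding PP_def by auto
      have "{{a',b'},{b',c'},{c',d'}} = {{a,b},{b,c},{c,d}}" using x(3) that(2) unfolding phi_def by simp
      from fib[OF ab(1) ed(4) ed(6) ab(2) ed(5) ab(3) ab'(1) ed'(1) ed'(3) ab'(2) ed'(2) ab'(3) this]
      show "x \<in> {(a,b,c,d), (d,c,b,a)}" using x(1) by auto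
    next
      fix x assume "x \<in> {(a,b,c,d), (d,c,b,a)}"
      moreover have "(d,c,b,a) \<in> PP E" using ed ab unfolding PP_def by (auto simp: insert_commute)
      moreover have "phi (d,c,b,a) = phi (a,b,c,d)" unfolding phi_def by (auto simp: insert_commute)
      ultimately show "x \<in> {x\<in>PP E. phi x = y}" using that by auto
    qed
  qed
  have "card (PP E) = (\<Sum>y\<in>phi ` PP E. card {x\<in>PP E. phi x = y})"
    using sum.image_gen[OF fin, of "\<lambda>_. 1::nat" phi] by simp
  also have "\<dots> = (\<Sum>y\<in>phi ` PP E. 2)"
  proof (rule sum.cong[OF refl])
    fix y assume "y \<in> phi ` PP E"
    then obtain a b c d where x: "(a,b,c,d) \<in> PP E" "y = phi (a,b,c,d)" by auto
    have "a \<noteq> d" using x(1) unfolding PP_def by auto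
    then show "card {x\<in>PP E. phi x = y} = 2" using fibre[OF x] by simp
  qed
  also have "\<dots> = 2 * card (phi ` PP E)" by simp
  finally show ?thesis unfolding count_P4_def count_set[OF G] .
qed


definition QQ :: "'a set set \<Rightarrow> ('a \<times> 'a \<times> 'a \<times> 'a) set" where
  "QQ E = {(a,b,c,d). {a,b}\<in>E \<and> {b,c}\<in>E \<and> {c,d}\<in>E \<and> a\<noteq>c \<and> b\<noteq>d}"
definition TT :: "'a set set \<Rightarrow> ('a \<times> 'a \<times> 'a \<times> 'a) set" where
  "TT E = {(a,b,c,d). {a,b}\<in>E \<and> {b,c}\<in>E \<and> {c,d}\<in>E \<and> a\<noteq>c \<and> b\<noteq>d \<and> a = d}"

lemma card_sigma_sum: assumes G: "simple_graph V E" and fin: "\<And>b c. finite (F b c)"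
  shows "card (Sigma (Sigma V (nbhd E)) (\<lambda>(b,c). F b c)) = (\<Sum>b\<in>V. \<Sum>c\<in>nbhd E b. card (F b c))"
proof -
  have fV: "finite V" using G unfolding simple_graph_def by auto
  have fS: "finite (Sigma V (nbhd E))" using fV sg_nbhd_fin[OF G] by auto
  have "card (Sigma (Sigma V (nbhd E)) (\<lambda>(b,c). F b c)) = (\<Sum>p\<in>Sigma V (nbhd E). card (case p of (b,c) \<Rightarrow> F b c))"
    by (rule card_SigmaI[OF fS]) (auto simp: fin)
  also have "\<dots> = (\<Sum>(b,c)\<in>Sigma V (nbhd E). card (F b c))"
    by (rule sum.cong) auto
  also have "\<dots> = (\<Sum>b\<in>V. \<Sum>c\<in>nbhd E b. card (F b c))"
    by (rule sum.Sigma[symmetric]) (use fV sg_nbhd_fin[OF G] in auto)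
  finally show ?thesis .
qed

lemma card_QQ: assumes G: "simple_graph V E"
  shows "card (QQ E) = (\<Sum>b\<in>V. \<Sum>c\<in>nbhd E b. (degree E b - 1) * (degree E c - 1))"
proof -
  let ?F = "\<lambda>b c. (nbhd E b - {c}) \<times> (nbhd E c - {b})"
  let ?g = "\<lambda>((b,c),(a,d)). (a,b,c,d)"
  have "QQ E = ?g ` Sigma (Sigma V (nbhd E)) (\<lambda>(b,c). ?F b c)"
  proof (intro equalityI subsetI)
    fix x assume "x \<in> QQ E"
    then obtain a b c d where x: "x = (a,b,c,d)" "{a,b}\<in>E" "{b,c}\<in>E" "{c,d}\<in>E" "a\<noteq>c" "b\<noteq>d"
      unfolding QQ_def by auto
    have "b \<in> V" using x(3) sg_edge[OF G] by blast
    then have "((b,c),(a,d)) \<in> Sigma (Sigma V (nbhd E)) (\<lambda>(b,c). ?F b c)"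
      using x unfolding nbhd_def by (auto simp: insert_commute)
    then show "x \<in> ?g ` Sigma (Sigma V (nbhd E)) (\<lambda>(b,c). ?F b c)" using x(1) by force
  next
    fix x assume "x \<in> ?g ` Sigma (Sigma V (nbhd E)) (\<lambda>(b,c). ?F b c)"
    then show "x \<in> QQ E" unfolding QQ_def nbhd_def by (auto simp: insert_commute)
  qed
  moreover have "inj_on ?g (Sigma (Sigma V (nbhd E)) (\<lambda>(b,c). ?F b c))"
    unfolding inj_on_def by auto
  ultimately have "card (QQ E) = card (Sigma (Sigma V (nbhd E)) (\<lambda>(b,c). ?F b c))"
    by (simp add: card_image)
  also have "\<dots> = (\<Sum>b\<in>V. \<Sum>c\<in>nbhd E b. card (?F b c))"
    by (rule card_sigma_sum[OF G]) (simp add: sg_nbhd_fin[OF G])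
  also have "\<dots> = (\<Sum>b\<in>V. \<Sum>c\<in>nbhd E b. (degree E b - 1) * (degree E c - 1))"
  proof (intro sum.cong refl)
    fix b c assume "c \<in> nbhd E b"
    then have "b \<in> nbhd E c" using sg_nbhd_sym by metis
    with \<open>c \<in> nbhd E b\<close> show "card (?F b c) = (degree E b - 1) * (degree E c - 1)"
      by (simp add: card_cartesian_product sg_degree[OF G] sg_nbhd_fin[OF G])
  qed
  finally show ?thesis .
qed

lemma card_TT: assumes G: "simple_graph V E"
  shows "card (TT E) = (\<Sum>b\<in>V. \<Sum>c\<in>nbhd E b. card (nbhd E b \<inter> nbhd E c))"
proof -
  let ?F = "\<lambda>b c. nbhd E b \<inter> nbhd E c"
  let ?g = "\<lambda>((b,c),a). (a,b,c,a)"
  have "TT E = ?g ` Sigma (Sigma V (nbhd E)) (\<lambda>(b,c). ?F b c)"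
  proof (intro equalityI subsetI)
    fix x assume "x \<in> TT E"
    then obtain a b c where x: "x = (a,b,c,a)" "{a,b}\<in>E" "{b,c}\<in>E" "{c,a}\<in>E"
      unfolding TT_def by auto
    have "b \<in> V" using x(3) sg_edge[OF G] by blast
    then have "((b,c),a) \<in> Sigma (Sigma V (nbhd E)) (\<lambda>(b,c). ?F b c)"
      using x unfolding nbhd_def by (auto simp: insert_commute)
    then show "x \<in> ?g ` Sigma (Sigma V (nbhd E)) (\<lambda>(b,c). ?F b c)" using x(1) by force
  next
    fix x assume "x \<in> ?g ` Sigma (Sigma V (nbhd E)) (\<lambda>(b,c). ?F b c)"
    then obtain a b c where x: "x = (a,b,c,a)" "{b,a}\<in>E" "{b,c}\<in>E" "{c,a}\<in>E"
      unfolding nbhd_def by auto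
    have "a \<noteq> c" "b \<noteq> a" using x(4) x(2) sg_edge[OF G] by blast+
    then show "x \<in> TT E" using x unfolding TT_def by (auto simp: insert_commute)
  qed
  moreover have "inj_on ?g (Sigma (Sigma V (nbhd E)) (\<lambda>(b,c). ?F b c))"
    unfolding inj_on_def by auto
  ultimately have "card (TT E) = card (Sigma (Sigma V (nbhd E)) (\<lambda>(b,c). ?F b c))"
    by (simp add: card_image)
  also have "\<dots> = (\<Sum>b\<in>V. \<Sum>c\<in>nbhd E b. card (?F b c))"
    by (rule card_sigma_sum[OF G]) (simp add: sg_nbhd_fin[OF G])
  finally show ?thesis .
qed

lemma card_PP_QT: assumes G: "simple_graph V E"
  shows "card (PP E) + card (TT E) = card (QQ E)"
proof -
  have fin: "finite (QQ E)"
  proof (rule finite_subset)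
    show "QQ E \<subseteq> V \<times> V \<times> V \<times> V" unfolding QQ_def using sg_edge[OF G] by blast
    show "finite (V \<times> V \<times> V \<times> V)" using G unfolding simple_graph_def by simp
  qed
  have "QQ E = PP E \<union> TT E" "PP E \<inter> TT E = {}" unfolding QQ_def PP_def TT_def by auto
  then show ?thesis using fin by (metis card_Un_disjoint finite_Un)
qed


theorem proposition12:
  fixes V :: "'a set" and E :: "'a set set"
  assumes "simple_graph V E"
  shows "real (count_P4 V E) =
           real (card E) - real (card V) * mean_sq_degree V E
           + (1/2) * (\<Sum>e\<in>E. \<Sum>s\<in>e. real (xi E s))
           - (\<Sum>e\<in>E. real (card (\<Inter>s\<in>e. nbhd E s)))"
proof -
  note G = assms
  let ?k = "\<lambda>x. real (degree E x)"
  let ?N = "nbhd E"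
  have fV: "finite V" using G unfolding simple_graph_def by auto
  have kN: "\<And>x. ?k x = real (card (?N x))" using sg_degree[OF G] by simp
  have h1: "2 * real (count_P4 V E) = real (card (QQ E)) - real (card (TT E))"
    using card_PP[OF G] card_PP_QT[OF G] by (metis add_diff_cancel_right' of_nat_add of_nat_mult of_nat_numeral)
  have h2: "real (card (QQ E)) = (\<Sum>b\<in>V. \<Sum>c\<in>?N b. ?k b * ?k c - ?k b - ?k c + 1)"
  proof -
    have "real (card (QQ E)) = (\<Sum>b\<in>V. \<Sum>c\<in>?N b. real ((degree E b - 1) * (degree E c - 1)))"
      unfolding card_QQ[OF G] by simp
    also have "\<dots> = (\<Sum>b\<in>V. \<Sum>c\<in>?N b. ?k b * ?k c - ?k b - ?k c + 1)"
    proof (intro sum.cong refl)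
      fix b c assume c: "c \<in> ?N b"
      then have b: "b \<in> ?N c" using sg_nbhd_sym by metis
      have "degree E b \<ge> 1" "degree E c \<ge> 1"
        using c b sg_nbhd_fin[OF G] sg_degree[OF G] by (metis card_0_eq empty_iff less_one not_le)+
      then show "real ((degree E b - 1) * (degree E c - 1)) = ?k b * ?k c - ?k b - ?k c + 1"
      proof -
        obtain x y where "degree E b = Suc x" "degree E c = Suc y"
          using \<open>degree E b \<ge> 1\<close> \<open>degree E c \<ge> 1\<close> by (metis Suc_le_D One_nat_def)
        then show ?thesis by (simp add: algebra_simps)
      qed
    qed
    finally show ?thesis .
  qed
  have h2': "(\<Sum>b\<in>V. \<Sum>c\<in>?N b. ?k b * ?k c - ?k b - ?k c + 1) =
     (\<Sum>b\<in>V. \<Sum>c\<in>?N b. ?k b * ?k c) - (\<Sum>b\<in>V. \<Sum>c\<in>?N b. ?k b) - (\<Sum>b\<in>V. \<Sum>c\<in>?N b. ?k c)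
      + (\<Sum>b\<in>V. \<Sum>c\<in>?N b. 1)"
    by (simp add: sum_subtractf sum.distrib)
  have h3: "(\<Sum>b\<in>V. \<Sum>c\<in>?N b. ?k b * ?k c) = (\<Sum>b\<in>V. ?k b * real (xi E b))"
    unfolding xi_def by (simp add: sum_distrib_left)
  have h4: "(\<Sum>b\<in>V. \<Sum>c\<in>?N b. ?k b) = (\<Sum>b\<in>V. ?k b ^ 2)"
    using kN by (simp add: power2_eq_square)
  have h5: "(\<Sum>b\<in>V. \<Sum>c\<in>?N b. ?k c) = (\<Sum>b\<in>V. ?k b ^ 2)"
    using sg_sym[OF G, of "\<lambda>b c. ?k b"] h4 by simp
  have h6: "(\<Sum>b\<in>V. \<Sum>c\<in>?N b. (1::real)) = 2 * real (card E)"
  proof -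
    have "(\<Sum>b\<in>V. \<Sum>c\<in>?N b. (1::real)) = (\<Sum>e\<in>E. \<Sum>s\<in>e. (1::real))"
      using sg_L0[OF G, of "\<lambda>_ _. (1::real)"] by simp
    also have "\<dots> = (\<Sum>e\<in>E. 2)" by (rule sum.cong[OF refl]) (use G in \<open>simp add: simple_graph_def\<close>)
    finally show ?thesis by simp
  qed
  have h7: "(\<Sum>e\<in>E. \<Sum>s\<in>e. real (xi E s)) = (\<Sum>b\<in>V. ?k b * real (xi E b))"
    using sg_L0[OF G, of "\<lambda>s _. real (xi E s)"] kN by simp
  have h8: "real (card (TT E)) = 2 * (\<Sum>e\<in>E. real (card (\<Inter>s\<in>e. nbhd E s)))"
  proof -
    have "real (card (TT E)) = (\<Sum>b\<in>V. \<Sum>c\<in>?N b. real (card (\<Inter>s\<in>{b,c}. nbhd E s)))"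
      unfolding card_TT[OF G] by simp
    also have "\<dots> = (\<Sum>e\<in>E. \<Sum>s\<in>e. real (card (\<Inter>s\<in>e. nbhd E s)))"
      using sg_L0[OF G, of "\<lambda>_ e. real (card (\<Inter>s\<in>e. nbhd E s))"] by simp
    also have "\<dots> = (\<Sum>e\<in>E. 2 * real (card (\<Inter>s\<in>e. nbhd E s)))"
      by (rule sum.cong[OF refl]) (use G in \<open>simp add: simple_graph_def\<close>)
    finally show ?thesis by (simp add: sum_distrib_left)
  qed
  have h9: "real (card V) * mean_sq_degree V E = (\<Sum>b\<in>V. ?k b ^ 2)"
    unfolding mean_sq_degree_def using fV by (cases "V = {}") auto
  show ?thesis using h1 h2 h2' h3 h4 h5 h6 h7 h8 h9 by linarith
qed

end
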